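(* Let $\mathcal{X}$ and $\mathcal{Y}$ be mm-spaces with $X$ and $Y$ finite sets, and let $p\geq1$. If $|X|=|Y|$ then $d_{\mathrm{GM},p}(\mathcal{X},\mathcal{Y})=d_{\mathrm{GM},p}(\mathcal{Y},\mathcal{X})$. If $|X|\neq|Y|$, then at least one of $d_{\mathrm{GM},p}(\mathcal{X},\mathcal{Y})$, $d_{\mathrm{GM},p}(\mathcal{Y},\mathcal{X})$ equals $\infty$, so that $d_{\mathrm{GM},p}(\mathcal{X},\mathcal{Y})=d_{\mathrm{GM},p}(\mathcal{Y},\mathcal{X})$ holds only when both equal $\infty$.
   Context: A metric measure space (mm-space) is a triple $\mathcal{X}=(X,d_X,\mu_X)$ where $(X,d_X)$ is a compact metric space and $\mu_X$ is a Borel probability measure on $X$ with full support. For mm-spaces $\mathcal{X},\mathcal{Y}$, let $\mathcal{T}(\mu_X,\mu_Y)$ be the set of measurable maps $\phi:X\to Y$ with $\phi_\#\mu_X=\mu_Y$. For $p\in[1,\infty)$, $$d_{\mathrm{GM},p}(\mathcal{X},\mathcal{Y})=\inf_{\phi\in\mathcal{T}(\mu_X,\mu_Y)}\left(\iint_{X\times X}\big|d_X(x,x')-d_Y(\phi(x),\phi(x'))\big|^p\,\mu_X(dx)\,\mu_X(dx')\right)^{1/p},$$ with $d_{\mathrm{GM},p}(\mathcal{X},\mathcal{Y})=\infty$ if $\mathcal{T}(\mu_X,\mu_Y)=\emptyset$. *)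

theory Defs
  imports "HOL-Analysis.Analysis" "HOL-Library.Extended_Real"
begin

text \<open>On a finite metric space every Borel probability measure is given by its
point masses, and every map is measurable.\<close>

definition is_metric_on :: "'a set \<Rightarrow> ('a \<Rightarrow> 'a \<Rightarrow> real) \<Rightarrow> bool" where
  "is_metric_on X d \<longleftrightarrow>
     (\<forall>x\<in>X. \<forall>y\<in>X. d x y \<ge> 0 \<and> (d x y = 0 \<longleftrightarrow> x = y) \<and> d x y = d y x) \<and>
     (\<forall>x\<in>X. \<forall>y\<in>X. \<forall>z\<in>X. d x z \<le> d x y + d y z)"

definition finite_mm_space :: "'a set \<Rightarrow> ('a \<Rightarrow> 'a \<Rightarrow> real) \<Rightarrow> ('a \<Rightarrow> real) \<Rightarrow> bool" where
  "finite_mm_space X d \<mu> \<longleftrightarrow> finite X \<and> X \<noteq> {} \<and> is_metric_on X d \<and>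
     (\<forall>x\<in>X. \<mu> x > 0) \<and> (\<Sum>x\<in>X. \<mu> x) = 1"

definition transport_maps ::
  "'a set \<Rightarrow> ('a \<Rightarrow> real) \<Rightarrow> 'b set \<Rightarrow> ('b \<Rightarrow> real) \<Rightarrow> ('a \<Rightarrow> 'b) set" where
  "transport_maps X \<mu>X Y \<mu>Y =
     {\<phi>. (\<forall>x\<in>X. \<phi> x \<in> Y) \<and> (\<forall>y\<in>Y. (\<Sum>x\<in>{x\<in>X. \<phi> x = y}. \<mu>X x) = \<mu>Y y)}"

definition gm_cost ::
  "real \<Rightarrow> 'a set \<Rightarrow> ('a \<Rightarrow> 'a \<Rightarrow> real) \<Rightarrow> ('a \<Rightarrow> real) \<Rightarrow> ('b \<Rightarrow> 'b \<Rightarrow> real) \<Rightarrow> ('a \<Rightarrow> 'b) \<Rightarrow> real" where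
  "gm_cost p X dX \<mu>X dY \<phi> =
     (\<Sum>x\<in>X. \<Sum>x'\<in>X. \<bar>dX x x' - dY (\<phi> x) (\<phi> x')\<bar> powr p * \<mu>X x * \<mu>X x') powr (1 / p)"

definition d_GM ::
  "real \<Rightarrow> 'a set \<Rightarrow> ('a \<Rightarrow> 'a \<Rightarrow> real) \<Rightarrow> ('a \<Rightarrow> real) \<Rightarrow>
   'b set \<Rightarrow> ('b \<Rightarrow> 'b \<Rightarrow> real) \<Rightarrow> ('b \<Rightarrow> real) \<Rightarrow> ereal" where
  "d_GM p X dX \<mu>X Y dY \<mu>Y =
     (if transport_maps X \<mu>X Y \<mu>Y = {} then \<infinity>
      else (INF \<phi>\<in>transport_maps X \<mu>X Y \<mu>Y. ereal (gm_cost p X dX \<mu>X dY \<phi>)))"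

end

theory Submission
  imports Defs
begin

lemma tm_surj:
  assumes "finite_mm_space X dX \<mu>X" "finite_mm_space Y dY \<mu>Y"
    and "\<phi> \<in> transport_maps X \<mu>X Y \<mu>Y"
  shows "\<phi> ` X = Y"
proof
  show "\<phi> ` X \<subseteq> Y" using assms(3) unfolding transport_maps_def by auto
  show "Y \<subseteq> \<phi> ` X"
  proof
    fix y assume y: "y \<in> Y"
    hence "(\<Sum>x\<in>{x\<in>X. \<phi> x = y}. \<mu>X x) = \<mu>Y y" using assms(3) unfolding transport_maps_def by auto
    moreover have "\<mu>Y y > 0" using assms(2) y unfolding finite_mm_space_def by auto
    ultimately have "{x\<in>X. \<phi> x = y} \<noteq> {}" by (metis less_irrefl sum.empty)
    thus "y \<in> \<phi> ` X" by auto
  qed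
qed

lemma tm_card:
  assumes "finite_mm_space X dX \<mu>X" "finite_mm_space Y dY \<mu>Y"
    and "\<phi> \<in> transport_maps X \<mu>X Y \<mu>Y"
  shows "card Y \<le> card X"
  using tm_surj[OF assms] card_image_le assms(1) unfolding finite_mm_space_def by metis

lemma tm_swap:
  assumes A: "finite_mm_space X dX \<mu>X" and B: "finite_mm_space Y dY \<mu>Y"
    and c: "card X = card Y"
    and ph: "\<phi> \<in> transport_maps X \<mu>X Y \<mu>Y"
  shows "\<exists>\<psi>\<in>transport_maps Y \<mu>Y X \<mu>X.
           gm_cost p Y dY \<mu>Y dX \<psi> = gm_cost p X dX \<mu>X dY \<phi>"
proof -
  have fX: "finite X" using A unfolding finite_mm_space_def by auto
  have im: "\<phi> ` X = Y" using tm_surj[OF A B ph] .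
  have inj: "inj_on \<phi> X" using im c fX by (simp add: eq_card_imp_inj_on)
  have bij: "bij_betw \<phi> X Y" using im inj by (simp add: bij_betw_def)
  have mu: "\<mu>Y (\<phi> x) = \<mu>X x" if x: "x \<in> X" for x
  proof -
    have "{x'\<in>X. \<phi> x' = \<phi> x} = {x}" using inj x by (auto dest: inj_onD)
    moreover have "\<phi> x \<in> Y" using x im by auto
    ultimately show ?thesis using ph unfolding transport_maps_def by force
  qed
  define \<psi> where "\<psi> = inv_into X \<phi>"
  have bij2: "bij_betw \<psi> Y X" unfolding \<psi>_def using bij by (rule bij_betw_inv_into)
  have psiphi: "\<psi> (\<phi> x) = x" if "x \<in> X" for x unfolding \<psi>_def using inj that by simp
  have phipsi: "\<phi> (\<psi> y) = y" if "y \<in> Y" for y unfolding \<psi>_def using im that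
    by (simp add: f_inv_into_f)
  have psiY: "\<psi> y \<in> X" if "y \<in> Y" for y using bij2 that by (auto simp: bij_betw_def)
  have "\<psi> \<in> transport_maps Y \<mu>Y X \<mu>X"
    unfolding transport_maps_def
  proof (intro CollectI conjI ballI)
    fix y assume "y \<in> Y" thus "\<psi> y \<in> X" by (rule psiY)
  next
    fix x assume x: "x \<in> X"
    have "{y\<in>Y. \<psi> y = x} = {\<phi> x}" using x psiphi phipsi im by auto
    thus "(\<Sum>y\<in>{y\<in>Y. \<psi> y = x}. \<mu>Y y) = \<mu>X x" using mu x by simp
  qed
  moreover have "gm_cost p Y dY \<mu>Y dX \<psi> = gm_cost p X dX \<mu>X dY \<phi>"
  proof -
    have "(\<Sum>y\<in>Y. \<Sum>y'\<in>Y. \<bar>dY y y' - dX (\<psi> y) (\<psi> y')\<bar> powr p * \<mu>Y y * \<mu>Y y')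
        = (\<Sum>x\<in>X. \<Sum>x'\<in>X. \<bar>dY (\<phi> x) (\<phi> x') - dX (\<psi> (\<phi> x)) (\<psi> (\<phi> x'))\<bar> powr p * \<mu>Y (\<phi> x) * \<mu>Y (\<phi> x'))"
      using im inj by (simp add: sum.reindex_bij_betw[OF bij, symmetric])
    also have "\<dots> = (\<Sum>x\<in>X. \<Sum>x'\<in>X. \<bar>dX x x' - dY (\<phi> x) (\<phi> x')\<bar> powr p * \<mu>X x * \<mu>X x')"
      by (intro sum.cong refl) (simp add: psiphi mu abs_minus_commute)
    finally show ?thesis unfolding gm_cost_def by simp
  qed
  ultimately show ?thesis by blast
qed

lemma dgm_le:
  assumes A: "finite_mm_space X dX \<mu>X" and B: "finite_mm_space Y dY \<mu>Y"
    and c: "card X = card Y"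
  shows "d_GM p Y dY \<mu>Y X dX \<mu>X \<le> d_GM p X dX \<mu>X Y dY \<mu>Y"
proof (cases "transport_maps X \<mu>X Y \<mu>Y = {}")
  case True thus ?thesis by (simp add: d_GM_def)
next
  case False
  then obtain \<phi> where "\<phi> \<in> transport_maps X \<mu>X Y \<mu>Y" by auto
  then obtain \<psi> where "\<psi> \<in> transport_maps Y \<mu>Y X \<mu>X" using tm_swap[OF A B c] by blast
  hence ne: "transport_maps Y \<mu>Y X \<mu>X \<noteq> {}" by auto
  have "(INF \<psi>\<in>transport_maps Y \<mu>Y X \<mu>X. ereal (gm_cost p Y dY \<mu>Y dX \<psi>))
      \<le> (INF \<phi>\<in>transport_maps X \<mu>X Y \<mu>Y. ereal (gm_cost p X dX \<mu>X dY \<phi>))"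
  proof (rule INF_greatest)
    fix \<phi> assume "\<phi> \<in> transport_maps X \<mu>X Y \<mu>Y"
    then obtain \<psi> where "\<psi> \<in> transport_maps Y \<mu>Y X \<mu>X"
      "gm_cost p Y dY \<mu>Y dX \<psi> = gm_cost p X dX \<mu>X dY \<phi>" using tm_swap[OF A B c] by blast
    thus "(INF \<psi>\<in>transport_maps Y \<mu>Y X \<mu>X. ereal (gm_cost p Y dY \<mu>Y dX \<psi>)) \<le> ereal (gm_cost p X dX \<mu>X dY \<phi>)"
      by (metis INF_lower)
  qed
  thus ?thesis using False ne by (simp add: d_GM_def)
qed

lemma dgm_inf:
  assumes A: "finite_mm_space X dX \<mu>X" and B: "finite_mm_space Y dY \<mu>Y"
    and c: "card X < card Y"
  shows "d_GM p X dX \<mu>X Y dY \<mu>Y = \<infinity>"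
proof -
  have "transport_maps X \<mu>X Y \<mu>Y = {}" using tm_card[OF A B] c by force
  thus ?thesis by (simp add: d_GM_def)
qed

theorem proposition2p3:
  fixes X :: "'a set" and dX :: "'a \<Rightarrow> 'a \<Rightarrow> real" and \<mu>X :: "'a \<Rightarrow> real"
    and Y :: "'b set" and dY :: "'b \<Rightarrow> 'b \<Rightarrow> real" and \<mu>Y :: "'b \<Rightarrow> real"
    and p :: real
  assumes "finite_mm_space X dX \<mu>X" and "finite_mm_space Y dY \<mu>Y" and "p \<ge> 1"
  shows "(card X = card Y \<longrightarrow> d_GM p X dX \<mu>X Y dY \<mu>Y = d_GM p Y dY \<mu>Y X dX \<mu>X)
       \<and> (card X \<noteq> card Y \<longrightarrow>
            (d_GM p X dX \<mu>X Y dY \<mu>Y = \<infinity> \<or> d_GM p Y dY \<mu>Y X dX \<mu>X = \<infinity>) \<and>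
            (d_GM p X dX \<mu>X Y dY \<mu>Y = d_GM p Y dY \<mu>Y X dX \<mu>X \<longleftrightarrow>
               d_GM p X dX \<mu>X Y dY \<mu>Y = \<infinity> \<and> d_GM p Y dY \<mu>Y X dX \<mu>X = \<infinity>))"
proof (intro conjI impI)
  assume "card X = card Y"
  thus "d_GM p X dX \<mu>X Y dY \<mu>Y = d_GM p Y dY \<mu>Y X dX \<mu>X"
    using dgm_le[OF assms(1,2)] dgm_le[OF assms(2,1)] by (metis antisym)
next
  assume "card X \<noteq> card Y"
  hence "card X < card Y \<or> card Y < card X" by arith
  thus o: "d_GM p X dX \<mu>X Y dY \<mu>Y = \<infinity> \<or> d_GM p Y dY \<mu>Y X dX \<mu>X = \<infinity>"
    using dgm_inf[OF assms(1,2)] dgm_inf[OF assms(2,1)] by blast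
  thus "(d_GM p X dX \<mu>X Y dY \<mu>Y = d_GM p Y dY \<mu>Y X dX \<mu>X \<longleftrightarrow>
               d_GM p X dX \<mu>X Y dY \<mu>Y = \<infinity> \<and> d_GM p Y dY \<mu>Y X dX \<mu>X = \<infinity>)"
    by auto
qed

end
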